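(* Let $\mathbb{X},\mathbb{Y}$ be Banach spaces, $\varphi:\mathbb{X}\to\mathbb{Y}$ a continuously differentiable mapping, $A$ a closed subset of $\mathbb{Y}$ and $\bar x\in\varphi^{-1}(A)$. Suppose that $A$ has the Shapiro first order contact property at $\varphi(\bar x)$ and that $\varphi$ is metrically regular around $\bar x$. Then $\varphi^{-1}(A)$ has the Shapiro first order contact property at $\bar x$.
   Context: $\mathbf{B}(a,\delta)$ denotes the open ball with center $a$ and radius $\delta$; $\mathbf{d}(x,D):=\inf\{\|x-y\|:y\in D\}$. "Continuously differentiable" means Fréchet differentiable everywhere with $x\mapsto\nabla\varphi(x)$ continuous in operator norm. For a closed set $C$ and $c\in C$, the Bouligand tangent cone $\mathbf{T}^{\mathbf B}(C,c)$ is the set of all $v$ for which there exist $v_n\to v$ and $t_n\downarrow0$ with $c+t_nv_n\in C$ for all $n$. A closed set $C$ of a Banach space has the Shapiro first order contact property at $a\in C$ if for every $\varepsilon>0$ there is $\delta>0$ such that $\mathbf{d}(x-u,\mathbf{T}^{\mathbf B}(C,u))\le\varepsilon\|x-u\|$ for all $x,u\in C\cap\mathbf{B}(a,\delta)$. A single-valued mapping $\varphi$ is metrically regular around $\bar x$ if there exist $\kappa>0$ and neighborhoods $U$ of $\bar x$ and $V$ of $\varphi(\bar x)$ such that $\mathbf{d}(x,\varphi^{-1}(y))\le\kappa\|\varphi(x)-y\|$ for all $(x,y)\in U\times V$. *)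

theory Defs
  imports "HOL-Analysis.Analysis"
begin

definition cont_diff :: "('a::real_normed_vector \<Rightarrow> 'b::real_normed_vector) \<Rightarrow> bool" where
  "cont_diff f \<longleftrightarrow> (\<exists>f' :: 'a \<Rightarrow> ('a \<Rightarrow>\<^sub>L 'b).
      (\<forall>x. (f has_derivative blinfun_apply (f' x)) (at x)) \<and> continuous_on UNIV f')"

definition bouligand_tangent :: "'a::real_normed_vector set \<Rightarrow> 'a \<Rightarrow> 'a set" where
  "bouligand_tangent C c = {v. \<exists>vs :: nat \<Rightarrow> 'a. \<exists>t :: nat \<Rightarrow> real.
      vs \<longlonglongrightarrow> v \<and> t \<longlonglongrightarrow> 0 \<and> (\<forall>n. t n > 0) \<and> decseq t \<and>
      (\<forall>n. c + t n *\<^sub>R vs n \<in> C)}"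

definition shapiro_contact :: "'a::real_normed_vector set \<Rightarrow> 'a \<Rightarrow> bool" where
  "shapiro_contact C a \<longleftrightarrow> (\<forall>\<epsilon>>0. \<exists>\<delta>>0. \<forall>x\<in>C \<inter> ball a \<delta>. \<forall>u\<in>C \<inter> ball a \<delta>.
      infdist (x - u) (bouligand_tangent C u) \<le> \<epsilon> * norm (x - u))"

definition metrically_regular_around ::
  "('a::real_normed_vector \<Rightarrow> 'b::real_normed_vector) \<Rightarrow> 'a \<Rightarrow> bool" where
  "metrically_regular_around f xbar \<longleftrightarrow> (\<exists>\<kappa>>0. \<exists>U V. open U \<and> xbar \<in> U \<and> open V \<and> f xbar \<in> V \<and>
      (\<forall>y\<in>V. f -` {y} \<noteq> {}) \<and>
      (\<forall>x\<in>U. \<forall>y\<in>V. infdist x (f -` {y}) \<le> \<kappa> * norm (f x - y)))"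

end

theory Submission imports Defs begin

lemma infdist_lessE:
  assumes "A \<noteq> {}" "infdist x A < r"
  obtains a where "a \<in> A" "dist x a < r"
  using assms by (auto simp: infdist_notempty cINF_less_iff)

lemma zero_in_tangent:
  fixes c :: "'a::real_normed_vector"
  assumes "c \<in> C"
  shows "0 \<in> bouligand_tangent C c"
proof -
  have "decseq (\<lambda>n. inverse (real (Suc n)))"
    by (auto simp: decseq_def intro!: le_imp_inverse_le)
  moreover have "(\<lambda>n. inverse (real (Suc n))) \<longlonglongrightarrow> 0"
    by (rule LIMSEQ_inverse_real_of_nat)
  moreover have "\<forall>n. inverse (real (Suc n)) > 0" by simp
  moreover have "(\<lambda>n. 0::'a) \<longlonglongrightarrow> 0" by simp
  moreover have "\<forall>n. c + inverse (real (Suc n)) *\<^sub>R (0::'a) \<in> C" using assms by simp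
  ultimately show ?thesis
    unfolding bouligand_tangent_def by blast
qed

lemma approx_to_exact:
  fixes T :: "'a::banach \<Rightarrow> 'b::real_normed_vector"
  assumes lin: "bounded_linear T" and M: "M \<ge> 0"
    and approx: "\<And>y. \<exists>k. norm k \<le> M * norm y \<and> norm (T k - y) \<le> norm y / 2"
  shows "\<exists>h. T h = y \<and> norm h \<le> 2 * M * norm y"
proof -
  obtain K where K: "\<And>y. norm (K y) \<le> M * norm y \<and> norm (T (K y) - y) \<le> norm y / 2"
    using approx by metis
  define ys where "ys n = ((\<lambda>z. z - T (K z))^^n) y" for n
  have ysS: "ys (Suc n) = ys n - T (K (ys n))" for n by (simp add: ys_def)
  have yb: "norm (ys n) \<le> norm y * (1/2)^n" for n
  proof (induction n)
    case 0 then show ?case by (simp add: ys_def)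
  next
    case (Suc n)
    have "norm (ys (Suc n)) = norm (T (K (ys n)) - ys n)"
      by (simp add: ysS norm_minus_commute)
    also have "\<dots> \<le> norm (ys n) / 2" using K by blast
    also have "\<dots> \<le> norm y * (1/2)^(Suc n)" using Suc by simp
    finally show ?case .
  qed
  have gz: "(\<lambda>n. norm y * (1/2::real)^n) \<longlonglongrightarrow> 0"
    by (intro tendsto_mult_right_zero LIMSEQ_power_zero) auto
  have ys0: "ys \<longlonglongrightarrow> 0"
    by (rule Lim_null_comparison[OF _ gz]) (use yb in auto)
  define k where "k n = K (ys n)" for n
  have kb: "norm (k n) \<le> M * norm y * (1/2)^n" for n
  proof -
    have "norm (k n) \<le> M * norm (ys n)" using K[of "ys n"] by (simp add: k_def)
    also have "\<dots> \<le> M * (norm y * (1/2)^n)" using yb M by (intro mult_left_mono) auto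
    finally show ?thesis by simp
  qed
  have sg: "summable (\<lambda>n. M * norm y * (1/2::real)^n)"
    by (intro summable_mult summable_geometric) auto
  have sk: "summable k"
    by (rule summable_comparison_test[OF _ sg]) (use kb in auto)
  have snk: "summable (\<lambda>n. norm (k n))"
    by (rule summable_comparison_test[OF _ sg]) (use kb in auto)
  define h where "h = suminf k"
  have "norm h \<le> (\<Sum>n. norm (k n))" unfolding h_def by (rule summable_norm[OF snk])
  also have "\<dots> \<le> (\<Sum>n. M * norm y * (1/2::real)^n)"
    by (rule suminf_le[OF kb snk sg])
  also have "\<dots> = M * norm y * 2"
    using suminf_geometric[of "1/2::real"] by (simp add: suminf_mult)
  finally have hn: "norm h \<le> 2 * M * norm y" by simp
  have "T h = (\<Sum>n. T (k n))" unfolding h_def by (rule bounded_linear.suminf[OF lin sk])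
  also have "(\<lambda>n. T (k n)) = (\<lambda>n. ys n - ys (Suc n))" by (simp add: k_def ysS)
  also have "(\<Sum>n. ys n - ys (Suc n)) = ys 0 - 0"
    by (rule sums_unique[symmetric], rule telescope_sums'[OF ys0])
  finally have "T h = y" by (simp add: ys_def)
  with hn show ?thesis by blast
qed

lemma approx_open:
  fixes \<phi> :: "'a::real_normed_vector \<Rightarrow> 'b::real_normed_vector"
  assumes der: "(\<phi> has_derivative D) (at u)" and \<kappa>: "\<kappa> > 0"
    and V: "open V" "\<phi> u \<in> V"
    and ne: "\<forall>y\<in>V. \<phi> -` {y} \<noteq> {}"
    and reg: "\<forall>y\<in>V. infdist u (\<phi> -` {y}) \<le> \<kappa> * norm (\<phi> u - y)"
  shows "\<exists>k. norm k \<le> (\<kappa>+1) * norm y \<and> norm (D k - y) \<le> norm y / 2"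
proof (cases "y = 0")
  case True
  have "linear D" using der has_derivative_linear by blast
  then show ?thesis using True by (intro exI[of _ 0]) (simp add: linear_0)
next
  case False
  have lin: "bounded_linear D" using der has_derivative_bounded_linear by blast
  define e where "e = 1 / (2 * (\<kappa> + 1))"
  have e: "e > 0" using \<kappa> by (simp add: e_def)
  obtain d where d: "d > 0" "\<forall>z. norm (z - u) < d \<longrightarrow> norm (\<phi> z - \<phi> u - D (z - u)) \<le> e * norm (z - u)"
    using der e unfolding has_derivative_at_alt by blast
  obtain r where r: "r > 0" "ball (\<phi> u) r \<subseteq> V" using V open_contains_ball by blast
  have ny: "norm y > 0" using False by simp
  define t where "t = min (d / (2 * (\<kappa>+1) * norm y)) (r / (2 * norm y))"
  have t: "t > 0" using d r ny \<kappa> by (simp add: t_def)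
  have tr: "t * norm y < r"
  proof -
    have "t * norm y \<le> r / (2 * norm y) * norm y" using ny by (intro mult_right_mono) (auto simp: t_def)
    also have "\<dots> = r / 2" using ny by simp
    finally show ?thesis using r by simp
  qed
  have td: "(\<kappa>+1) * t * norm y < d"
  proof -
    have "(\<kappa>+1) * t * norm y \<le> (\<kappa>+1) * (d / (2 * (\<kappa>+1) * norm y)) * norm y"
      using ny \<kappa> by (intro mult_right_mono mult_left_mono) (auto simp: t_def)
    also have "\<dots> = d / 2"
    proof -
      have "(\<kappa>+1) * norm y \<noteq> 0" using ny \<kappa> by simp
      then show ?thesis by (simp add: field_simps)
    qed
    finally show ?thesis using d by simp
  qed
  define y' where "y' = \<phi> u + t *\<^sub>R y"
  have y'V: "y' \<in> V" using r tr t by (auto simp: y'_def dist_norm)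
  have "norm (\<phi> u - y') = t * norm y" using t by (simp add: y'_def)
  then have "infdist u (\<phi> -` {y'}) \<le> \<kappa> * (t * norm y)" using reg y'V by metis
  also have "\<dots> < (\<kappa>+1) * t * norm y" using t ny by (simp add: algebra_simps)
  finally obtain z where z: "\<phi> z = y'" "dist u z < (\<kappa>+1) * t * norm y"
    using infdist_lessE ne y'V by (metis vimage_singleton_eq)
  have nz: "norm (z - u) < (\<kappa>+1) * t * norm y" using z by (simp add: dist_norm norm_minus_commute)
  define k where "k = (1/t) *\<^sub>R (z - u)"
  have "norm k = norm (z - u) / t" using t by (simp add: k_def)
  also have "\<dots> \<le> (\<kappa>+1) * norm y" using nz t by (simp add: divide_le_eq mult_ac)
  finally have kn: "norm k \<le> (\<kappa>+1) * norm y" .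
  have "norm (\<phi> z - \<phi> u - D (z - u)) \<le> e * norm (z - u)" using d nz td by auto
  also have "\<dots> \<le> e * ((\<kappa>+1) * t * norm y)" using e nz by simp
  also have "\<dots> = t * norm y / 2" using \<kappa> by (simp add: e_def field_simps)
  finally have A: "norm (t *\<^sub>R y - D (z - u)) \<le> t * norm y / 2" using z by (simp add: y'_def)
  have "D k = (1/t) *\<^sub>R D (z - u)" by (simp add: k_def linear_simps lin)
  then have "D k - y = (1/t) *\<^sub>R (D (z - u) - t *\<^sub>R y)" using t by (simp add: algebra_simps)
  then have "norm (D k - y) = norm (t *\<^sub>R y - D (z - u)) / t" using t by (simp add: norm_minus_commute)
  also have "\<dots> \<le> norm y / 2" using A t by (simp add: divide_le_eq mult_ac)
  finally show ?thesis using kn by blast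
qed

lemma tangent_preimage:
  fixes \<phi> :: "'a::real_normed_vector \<Rightarrow> 'b::real_normed_vector"
  assumes der: "(\<phi> has_derivative D) (at u)" and \<kappa>: "\<kappa> > 0"
    and U: "open U" "u \<in> U" and V: "open V" "\<phi> u \<in> V"
    and ne: "\<forall>y\<in>V. \<phi> -` {y} \<noteq> {}"
    and reg: "\<forall>x\<in>U. \<forall>y\<in>V. infdist x (\<phi> -` {y}) \<le> \<kappa> * norm (\<phi> x - y)"
    and w: "w \<in> bouligand_tangent A (\<phi> u)" and Dv: "D v = w"
  shows "v \<in> bouligand_tangent (\<phi> -` A) u"
proof -
  have lin: "bounded_linear D" using der has_derivative_bounded_linear by blast
  obtain ws t where ws: "ws \<longlonglongrightarrow> w" and t0: "t \<longlonglongrightarrow> 0" and tp: "\<forall>n. t n > 0"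
    and td: "decseq t" and tA: "\<forall>n. \<phi> u + t n *\<^sub>R ws n \<in> A"
    using w unfolding bouligand_tangent_def by blast
  have c1: "(\<lambda>n. u + t n *\<^sub>R v) \<longlonglongrightarrow> u"
    using tendsto_add[OF tendsto_const tendsto_scaleR[OF t0 tendsto_const], of u v] by simp
  have c2: "(\<lambda>n. \<phi> u + t n *\<^sub>R ws n) \<longlonglongrightarrow> \<phi> u"
    using tendsto_add[OF tendsto_const tendsto_scaleR[OF t0 ws], of "\<phi> u"] by simp
  have "eventually (\<lambda>n. u + t n *\<^sub>R v \<in> U) sequentially"
    using topological_tendstoD[OF c1 U] .
  moreover have "eventually (\<lambda>n. \<phi> u + t n *\<^sub>R ws n \<in> V) sequentially"
    using topological_tendstoD[OF c2 V] .
  ultimately obtain N where N: "\<And>n. n \<ge> N \<Longrightarrow> u + t n *\<^sub>R v \<in> U \<and> \<phi> u + t n *\<^sub>R ws n \<in> V"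
    unfolding eventually_sequentially by (metis (no_types, lifting) eventually_conj eventually_sequentially)
  define t' where "t' n = t (n + N)" for n
  define ws' where "ws' n = ws (n + N)" for n
  have t'p: "t' n > 0" for n using tp by (simp add: t'_def)
  have t'0: "t' \<longlonglongrightarrow> 0" unfolding t'_def using LIMSEQ_ignore_initial_segment[OF t0] .
  have ws'w: "ws' \<longlonglongrightarrow> w" unfolding ws'_def using LIMSEQ_ignore_initial_segment[OF ws] .
  have t'd: "decseq t'" using td by (auto simp: decseq_def t'_def)
  have "\<exists>z. \<phi> z = \<phi> u + t' n *\<^sub>R ws' n \<and>
      dist (u + t' n *\<^sub>R v) z < \<kappa> * norm (\<phi> (u + t' n *\<^sub>R v) - (\<phi> u + t' n *\<^sub>R ws' n)) + t' n ^ 2" for n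
  proof -
    have inU: "u + t' n *\<^sub>R v \<in> U" and inV: "\<phi> u + t' n *\<^sub>R ws' n \<in> V"
      using N[of "n+N"] by (auto simp: t'_def ws'_def)
    have "infdist (u + t' n *\<^sub>R v) (\<phi> -` {\<phi> u + t' n *\<^sub>R ws' n})
       < \<kappa> * norm (\<phi> (u + t' n *\<^sub>R v) - (\<phi> u + t' n *\<^sub>R ws' n)) + t' n ^ 2"
      using reg inU inV t'p[of n] by (meson add_strict_increasing2 order.refl less_add_same_cancel1 zero_less_power order_le_less_trans)
    then show ?thesis using infdist_lessE ne inV by (metis vimage_singleton_eq)
  qed
  then obtain z where z: "\<And>n. \<phi> (z n) = \<phi> u + t' n *\<^sub>R ws' n \<and>
      dist (u + t' n *\<^sub>R v) (z n) < \<kappa> * norm (\<phi> (u + t' n *\<^sub>R v) - (\<phi> u + t' n *\<^sub>R ws' n)) + t' n ^ 2"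
    by metis
  define vs where "vs n = (1 / t' n) *\<^sub>R (z n - u)" for n
  have inC: "u + t' n *\<^sub>R vs n \<in> \<phi> -` A" for n
  proof -
    have "u + t' n *\<^sub>R vs n = z n" using t'p[of n] by (simp add: vs_def)
    then show ?thesis using z[of n] tA[rule_format, of "n+N"] by (simp add: t'_def ws'_def)
  qed
  define r where "r n = (1 / t' n) *\<^sub>R (\<phi> (u + t' n *\<^sub>R v) - \<phi> u)" for n
  have rlim: "r \<longlonglongrightarrow> D v"
  proof (rule tendstoI)
    fix e :: real assume e: "e > 0"
    define e1 where "e1 = e / (2 * (norm v + 1))"
    have e1: "e1 > 0" unfolding e1_def using e by (intro divide_pos_pos) (auto intro: add_nonneg_pos)
    obtain d where d: "d > 0" "\<forall>z. norm (z - u) < d \<longrightarrow> norm (\<phi> z - \<phi> u - D (z - u)) \<le> e1 * norm (z - u)"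
      using der e1 unfolding has_derivative_at_alt by blast
    have "(\<lambda>n. norm (t' n *\<^sub>R v)) \<longlonglongrightarrow> 0"
      using tendsto_norm[OF tendsto_scaleR[OF t'0 tendsto_const, of v]] by simp
    then have ev: "eventually (\<lambda>n. norm (t' n *\<^sub>R v) < d) sequentially"
      using order_tendstoD(2) d(1) by blast
    show "eventually (\<lambda>n. dist (r n) (D v) < e) sequentially"
    proof (rule eventually_mono[OF ev])
      fix n assume n: "norm (t' n *\<^sub>R v) < d"
      have tn: "t' n > 0" by (rule t'p)
      have B: "norm (\<phi> (u + t' n *\<^sub>R v) - \<phi> u - D (t' n *\<^sub>R v)) \<le> e1 * norm (t' n *\<^sub>R v)"
        using d(2)[rule_format, of "u + t' n *\<^sub>R v"] n by simp
      have "r n - D v = (1 / t' n) *\<^sub>R (\<phi> (u + t' n *\<^sub>R v) - \<phi> u - D (t' n *\<^sub>R v))"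
        using tn by (simp add: r_def linear_simps lin algebra_simps)
      then have "dist (r n) (D v) = norm (\<phi> (u + t' n *\<^sub>R v) - \<phi> u - D (t' n *\<^sub>R v)) / t' n"
        using tn by (simp add: dist_norm)
      also have "\<dots> \<le> e1 * norm v" using B tn by (simp add: divide_le_eq mult_ac)
      also have "\<dots> < e"
      proof -
        have "e1 * norm v \<le> e1 * (norm v + 1)" using e1 by simp
        also have "\<dots> = e / 2"
        proof -
          have "norm v + 1 \<noteq> 0" by (metis add_nonneg_pos norm_ge_zero zero_less_one less_irrefl)
          then show ?thesis by (simp add: e1_def field_simps)
        qed
        finally show ?thesis using e by simp
      qed
      finally show "dist (r n) (D v) < e" .
    qed
  qed
  have bound: "norm (vs n - v) \<le> \<kappa> * norm (r n - ws' n) + t' n" for n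
  proof -
    have tn: "t' n > 0" by (rule t'p)
    have "vs n - v = (1 / t' n) *\<^sub>R (z n - (u + t' n *\<^sub>R v))" using tn
      by (simp add: vs_def algebra_simps)
    then have "norm (vs n - v) = dist (u + t' n *\<^sub>R v) (z n) / t' n"
      using tn by (simp add: dist_norm norm_minus_commute)
    also have "\<dots> \<le> (\<kappa> * norm (\<phi> (u + t' n *\<^sub>R v) - (\<phi> u + t' n *\<^sub>R ws' n)) + t' n ^ 2) / t' n"
      using z[of n] tn by (intro divide_right_mono) auto
    also have "\<phi> (u + t' n *\<^sub>R v) - (\<phi> u + t' n *\<^sub>R ws' n) = t' n *\<^sub>R (r n - ws' n)"
      using tn by (simp add: r_def algebra_simps)
    also have "(\<kappa> * norm (t' n *\<^sub>R (r n - ws' n)) + t' n ^ 2) / t' n = \<kappa> * norm (r n - ws' n) + t' n"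
    proof -
      have "norm (t' n *\<^sub>R (r n - ws' n)) = t' n * norm (r n - ws' n)" using tn by simp
      then show ?thesis using tn by (simp add: field_simps power2_eq_square)
    qed
    finally show ?thesis .
  qed
  have "(\<lambda>n. \<kappa> * norm (r n - ws' n) + t' n) \<longlonglongrightarrow> \<kappa> * norm (D v - w) + 0"
    by (intro tendsto_intros rlim ws'w t'0)
  then have g0: "(\<lambda>n. \<kappa> * norm (r n - ws' n) + t' n) \<longlonglongrightarrow> 0" using Dv by simp
  have "(\<lambda>n. vs n - v) \<longlonglongrightarrow> 0"
    by (rule Lim_null_comparison[OF _ g0]) (use bound in auto)
  then have "vs \<longlonglongrightarrow> v" using Lim_null by (simp add: LIM_zero_iff)
  then show ?thesis unfolding bouligand_tangent_def
    using t'0 t'p t'd inC by blast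
qed

theorem proposition3p4:
  fixes \<phi> :: "'a::banach \<Rightarrow> 'b::banach" and A :: "'b set" and xbar :: 'a
  assumes "cont_diff \<phi>"
    and "closed A"
    and "xbar \<in> \<phi> -` A"
    and "shapiro_contact A (\<phi> xbar)"
    and "metrically_regular_around \<phi> xbar"
  shows "shapiro_contact (\<phi> -` A) xbar"
proof -
  obtain F where Fd: "\<And>x. (\<phi> has_derivative blinfun_apply (F x)) (at x)"
    and Fc: "continuous_on UNIV F"
    using assms(1) unfolding cont_diff_def by blast
  obtain \<kappa> U V where \<kappa>: "\<kappa> > 0" and U: "open U" "xbar \<in> U" and V: "open V" "\<phi> xbar \<in> V"
    and ne: "\<forall>y\<in>V. \<phi> -` {y} \<noteq> {}"
    and reg: "\<forall>x\<in>U. \<forall>y\<in>V. infdist x (\<phi> -` {y}) \<le> \<kappa> * norm (\<phi> x - y)"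
    using assms(5) unfolding metrically_regular_around_def by blast
  define M where "M = 2 * (\<kappa> + 1)"
  have M: "M > 0" using \<kappa> by (simp add: M_def)
  have surj: "\<exists>h. blinfun_apply (F u) h = y \<and> norm h \<le> M * norm y"
    if "u \<in> U" "\<phi> u \<in> V" for u y
  proof -
    have "\<exists>h. blinfun_apply (F u) h = y \<and> norm h \<le> 2 * (\<kappa>+1) * norm y"
    proof (rule approx_to_exact)
      show "bounded_linear (blinfun_apply (F u))" by (rule blinfun.bounded_linear_right)
      show "\<kappa> + 1 \<ge> 0" using \<kappa> by simp
      fix y
      show "\<exists>k. norm k \<le> (\<kappa>+1) * norm y \<and> norm (blinfun_apply (F u) k - y) \<le> norm y / 2"
        using approx_open[OF Fd \<kappa> V(1) that(2) ne] reg that by blast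
    qed
    then show ?thesis by (simp add: M_def mult.assoc)
  qed
  define L where "L = norm (F xbar) + 2"
  have L: "L > 0" by (simp add: L_def add_nonneg_pos)
  show ?thesis unfolding shapiro_contact_def
  proof (intro allI impI)
    fix \<epsilon> :: real assume \<epsilon>: "\<epsilon> > 0"
    define \<eta> where "\<eta> = min 1 (\<epsilon> / (2 * M))"
    have \<eta>: "\<eta> > 0" "\<eta> \<le> 1" "M * \<eta> \<le> \<epsilon> / 2" using \<epsilon> M
      by (auto simp: \<eta>_def min_def field_simps)
    define \<epsilon>' where "\<epsilon>' = \<epsilon> / (2 * M * L)"
    have \<epsilon>': "\<epsilon>' > 0" "M * \<epsilon>' * L = \<epsilon> / 2" using \<epsilon> M L by (auto simp: \<epsilon>'_def)
    obtain \<delta>1 where \<delta>1: "\<delta>1 > 0" "\<And>z. dist z xbar < \<delta>1 \<Longrightarrow> dist (F z) (F xbar) < \<eta> / 2"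
      using Fc \<eta>(1) unfolding continuous_on_iff by (metis UNIV_I half_gt_zero)
    obtain \<delta>A where \<delta>A: "\<delta>A > 0" and shA: "\<forall>x\<in>A \<inter> ball (\<phi> xbar) \<delta>A. \<forall>u\<in>A \<inter> ball (\<phi> xbar) \<delta>A.
        infdist (x - u) (bouligand_tangent A u) \<le> \<epsilon>' * norm (x - u)"
      using assms(4) \<epsilon>'(1) unfolding shapiro_contact_def by blast
    obtain rV where rV: "rV > 0" "ball (\<phi> xbar) rV \<subseteq> V" using V open_contains_ball by blast
    have "isCont \<phi> xbar" using Fd has_derivative_continuous by blast
    then obtain \<delta>2 where \<delta>2: "\<delta>2 > 0" "\<And>z. dist z xbar < \<delta>2 \<Longrightarrow> dist (\<phi> z) (\<phi> xbar) < min \<delta>A rV"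
      using \<delta>A rV(1) unfolding continuous_at_eps_delta by (metis min_less_iff_conj)
    obtain \<delta>3 where \<delta>3: "\<delta>3 > 0" "ball xbar \<delta>3 \<subseteq> U" using U open_contains_ball by blast
    define \<delta> where "\<delta> = min \<delta>1 (min \<delta>2 \<delta>3)"
    have \<delta>: "\<delta> > 0" using \<delta>1 \<delta>2 \<delta>3 by (simp add: \<delta>_def)
    have ptwise: "infdist (x - u) (bouligand_tangent (\<phi> -` A) u) \<le> \<epsilon> * norm (x - u)"
      if x: "x \<in> \<phi> -` A \<inter> ball xbar \<delta>" and u: "u \<in> \<phi> -` A \<inter> ball xbar \<delta>" for x u
    proof -
      have xd: "dist x xbar < \<delta>" and ud: "dist u xbar < \<delta>" using x u by (auto simp: dist_commute)
      have uU: "u \<in> U" using ud \<delta>3 by (auto simp: \<delta>_def dist_commute)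
      have uV: "\<phi> u \<in> V" using \<delta>2(2)[of u] ud rV by (auto simp: \<delta>_def dist_commute)
      have aA: "\<phi> x \<in> A \<inter> ball (\<phi> xbar) \<delta>A" using x \<delta>2(2)[of x] xd by (auto simp: \<delta>_def dist_commute)
      have bA: "\<phi> u \<in> A \<inter> ball (\<phi> xbar) \<delta>A" using u \<delta>2(2)[of u] ud by (auto simp: \<delta>_def dist_commute)
      have Fclose: "norm (F z - F xbar) < \<eta> / 2" if "z \<in> ball xbar \<delta>" for z
        using \<delta>1(2)[of z] that by (auto simp: \<delta>_def dist_commute dist_norm norm_minus_commute)
      have lin_est: "norm (\<phi> x - \<phi> u - blinfun_apply (F u) (x - u)) \<le> norm (x - u) * \<eta>"
      proof (rule differentiable_bound_linearization[where S="ball xbar \<delta>" and f'="\<lambda>z. blinfun_apply (F z)"])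
        fix t :: real assume "t \<in> {0..1}"
        then have "(1 - t) *\<^sub>R u + t *\<^sub>R x \<in> ball xbar \<delta>"
          using x u by (intro convexD[OF convex_ball]) auto
        moreover have "(1 - t) *\<^sub>R u + t *\<^sub>R x = u + t *\<^sub>R (x - u)" by (simp add: algebra_simps)
        ultimately show "u + t *\<^sub>R (x - u) \<in> ball xbar \<delta>" by simp
      next
        fix z assume "z \<in> ball xbar \<delta>"
        show "(\<phi> has_derivative blinfun_apply (F z)) (at z within ball xbar \<delta>)"
          using Fd has_derivative_at_withinI by blast
      next
        fix z assume z: "z \<in> ball xbar \<delta>"
        have "onorm (blinfun_apply (F z) - blinfun_apply (F u)) = norm (F z - F u)"
          by (simp add: norm_blinfun.rep_eq minus_blinfun.rep_eq fun_diff_def)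
        also have "\<dots> \<le> norm (F z - F xbar) + norm (F u - F xbar)"
        proof -
          have "F z - F u = (F z - F xbar) - (F u - F xbar)" by simp
          then show ?thesis by (metis norm_triangle_ineq4)
        qed
        also have "\<dots> \<le> \<eta>" using Fclose[OF z] Fclose[of u] u by auto
        finally show "onorm (blinfun_apply (F z) - blinfun_apply (F u)) \<le> \<eta>" .
      next
        show "u \<in> ball xbar \<delta>" using u by auto
      qed
      have Fu: "norm (F u) \<le> L - 1"
      proof -
        have "norm (F u) \<le> norm (F xbar) + norm (F u - F xbar)" by (rule norm_triangle_sub)
        then show ?thesis using Fclose[of u] u \<eta> by (auto simp: L_def)
      qed
      have ab: "norm (\<phi> x - \<phi> u) \<le> L * norm (x - u)"
      proof -
        have "norm (\<phi> x - \<phi> u) \<le> norm (blinfun_apply (F u) (x - u)) + norm (x - u) * \<eta>"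
          using lin_est norm_triangle_sub[of "\<phi> x - \<phi> u" "blinfun_apply (F u) (x - u)"] by linarith
        also have "\<dots> \<le> norm (F u) * norm (x - u) + norm (x - u) * \<eta>"
          using norm_blinfun by simp
        also have "\<dots> \<le> (L - 1) * norm (x - u) + norm (x - u) * 1"
          using Fu \<eta> by (intro add_mono mult_right_mono mult_left_mono) auto
        finally show ?thesis by (simp add: algebra_simps)
      qed
      have Tne: "bouligand_tangent A (\<phi> u) \<noteq> {}" using zero_in_tangent bA by blast
      have main: "infdist (x - u) (bouligand_tangent (\<phi> -` A) u) \<le> \<epsilon> * norm (x - u) + s"
        if s: "s > 0" for s
      proof -
        have "infdist (\<phi> x - \<phi> u) (bouligand_tangent A (\<phi> u)) < \<epsilon>' * norm (\<phi> x - \<phi> u) + s / M"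
        proof -
          have "infdist (\<phi> x - \<phi> u) (bouligand_tangent A (\<phi> u)) \<le> \<epsilon>' * norm (\<phi> x - \<phi> u)"
            using shA aA bA by blast
          moreover have "s / M > 0" using s M by simp
          ultimately show ?thesis by linarith
        qed
        then obtain w where w: "w \<in> bouligand_tangent A (\<phi> u)"
          and wd: "dist (\<phi> x - \<phi> u) w < \<epsilon>' * norm (\<phi> x - \<phi> u) + s / M"
          using infdist_lessE Tne by blast
        obtain h' where h': "blinfun_apply (F u) h' = w - blinfun_apply (F u) (x - u)"
          and h'n: "norm h' \<le> M * norm (w - blinfun_apply (F u) (x - u))"
          using surj[OF uU uV] by blast
        define v where "v = (x - u) + h'"
        have Fv: "blinfun_apply (F u) v = w" by (simp add: v_def blinfun.add_right h')
        have vT: "v \<in> bouligand_tangent (\<phi> -` A) u"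
          by (rule tangent_preimage[OF Fd \<kappa> U(1) uU V(1) uV ne reg w Fv])
        have chain1: "infdist (x - u) (bouligand_tangent (\<phi> -` A) u) \<le> norm h'"
          using infdist_le[OF vT, of "x - u"] by (simp add: v_def dist_norm)
        have tri: "norm (w - blinfun_apply (F u) (x - u))
            \<le> dist (\<phi> x - \<phi> u) w + norm (\<phi> x - \<phi> u - blinfun_apply (F u) (x - u))"
        proof -
          have "w - blinfun_apply (F u) (x - u) = (w - (\<phi> x - \<phi> u)) + (\<phi> x - \<phi> u - blinfun_apply (F u) (x - u))"
            by simp
          then have "norm (w - blinfun_apply (F u) (x - u)) \<le> norm (w - (\<phi> x - \<phi> u)) + norm (\<phi> x - \<phi> u - blinfun_apply (F u) (x - u))"
            by (metis norm_triangle_ineq)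
          then show ?thesis by (simp add: dist_norm norm_minus_commute)
        qed
        have nb: "norm (w - blinfun_apply (F u) (x - u))
            \<le> \<epsilon>' * (L * norm (x - u)) + s / M + norm (x - u) * \<eta>"
        proof -
          have "\<epsilon>' * norm (\<phi> x - \<phi> u) \<le> \<epsilon>' * (L * norm (x - u))"
            using ab \<epsilon>'(1) by (intro mult_left_mono) auto
          then show ?thesis using wd lin_est tri by linarith
        qed
        have "norm h' \<le> M * (\<epsilon>' * (L * norm (x - u)) + s / M + norm (x - u) * \<eta>)"
        proof -
          have "M * norm (w - blinfun_apply (F u) (x - u)) \<le> M * (\<epsilon>' * (L * norm (x - u)) + s / M + norm (x - u) * \<eta>)"
            using nb M by (intro mult_left_mono) auto
          then show ?thesis using h'n by linarith
        qed
        also have "\<dots> = (M * \<epsilon>' * L) * norm (x - u) + s + (M * \<eta>) * norm (x - u)"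
          using M by (simp add: algebra_simps)
        also have "\<dots> \<le> (\<epsilon>/2) * norm (x - u) + s + (\<epsilon>/2) * norm (x - u)"
          using \<epsilon>'(2) \<eta>(3) by (intro add_mono mult_right_mono) auto
        finally have "norm h' \<le> \<epsilon> * norm (x - u) + s" by (simp add: algebra_simps)
        then show ?thesis using chain1 by linarith
      qed
      show ?thesis by (rule field_le_epsilon) (use main in auto)
    qed
    show "\<exists>\<delta>>0. \<forall>x\<in>\<phi> -` A \<inter> ball xbar \<delta>. \<forall>u\<in>\<phi> -` A \<inter> ball xbar \<delta>.
      infdist (x - u) (bouligand_tangent (\<phi> -` A) u) \<le> \<epsilon> * norm (x - u)"
      using \<delta> ptwise by blast
  qed
qed

end
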